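(* For every $n\in\mathbb{N}$ and all words $A_1,A_2\in\mathsf{W}_\omega$ with $A_1\sim A_2$, we have $a_n(A_1)\sim a_n(A_2)$. Moreover, for all $n\in\mathbb{N}$, $A_1\in\mathsf{NF}$ and $A_2\in\mathsf{W}_\omega$ with $A_1\sim A_2$, we have $\Diamond_nA_1\sim a_n(A_2)$.
   Context: Words are finite strings over the alphabet $\mathbb{N}=\{0,1,2,\dots\}$; $\mathsf{W}_\omega$ is the set of all words, $\Lambda$ the empty word, $AB$ concatenation; $a_n\colon\mathsf{W}_\omega\to\mathsf{W}_\omega$ is $a_n(A)=An$. For $k\in\mathbb{N}$, $\mathsf{S}_k$ is the set of words all of whose symbols are $\ge k$. Given a linear preorder $\precsim$ with $A\sim B$ iff $A\precsim B\wedge B\precsim A$ and $A\prec B$ iff $A\precsim B\wedge\neg B\precsim A$, a finite sequence $(A_1,\dots,A_p)$ is lexicographically not greater than $(B_1,\dots,B_q)$ iff either $p\le q$ and $A_i\sim B_i$ for all $i\le p$, or there is $s<\min(p,q)$ with $A_i\sim B_i$ for $i\le s$ and $A_{s+1}\prec B_{s+1}$. A lexicographically maximal subsequence of a finite sequence is a subsequence that is lexicographically not less than every subsequence. The linear preorder $\precsim$ on $\mathsf{W}_\omega$ is defined by recursion on (largest symbol of $AB$) $-$ (smallest symbol of $AB$): $\Lambda\precsim\Lambda$; if $AB$ is nonempty with minimal symbol $n$, write uniquely $A=A_1n\cdots nA_k$, $B=B_1n\cdots nB_l$ ($k,l\ge1$) with $A_i,B_j\in\mathsf{S}_{n+1}$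 (possibly empty); let $C,D$ be lexicographically maximal subsequences of $(A_1,\dots,A_k)$, $(B_1,\dots,B_l)$; then $A\precsim B$ iff $C$ is lexicographically not greater than $D$. The set $\mathsf{NF}$: $\Lambda\in\mathsf{NF}$; a word with minimal symbol $n$, written $A_1n\cdots nA_k$ with $k\ge2$, $A_i\in\mathsf{S}_{n+1}$, is in $\mathsf{NF}$ iff $A_k\precsim\dots\precsim A_1$ and all $A_i\in\mathsf{NF}$. Every word is $\sim$-equivalent to exactly one word of $\mathsf{NF}$. For $A\in\mathsf{NF}$, $\Diamond_nA$ is the unique word of $\mathsf{NF}$ that is $\sim$-equivalent to $An$. *)

theory Defs
  imports Main
begin

type_synonym word = "nat list"

definition a_op :: "nat \<Rightarrow> word \<Rightarrow> word" where
  "a_op n A = A @ [n]"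

text \<open>Decomposition of a word at the occurrences of the symbol n:
  A = A_1 n A_2 n ... n A_k, returned as [A_1, ..., A_k] (k >= 1).\<close>

fun split_at_sym :: "nat \<Rightarrow> word \<Rightarrow> word list" where
  "split_at_sym n [] = [[]]"
| "split_at_sym n (x # xs) =
     (if x = n then [] # split_at_sym n xs
      else (case split_at_sym n xs of
              [] \<Rightarrow> [[x]]
            | (y # ys) \<Rightarrow> (x # y) # ys))"

definition lex_le :: "('a \<Rightarrow> 'a \<Rightarrow> bool) \<Rightarrow> 'a list \<Rightarrow> 'a list \<Rightarrow> bool" where
  "lex_le le xs ys \<longleftrightarrow>
     (length xs \<le> length ys \<and>
        (\<forall>i < length xs. le (xs ! i) (ys ! i) \<and> le (ys ! i) (xs ! i)))
   \<or> (\<exists>s < min (length xs) (length ys).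
        (\<forall>i < s. le (xs ! i) (ys ! i) \<and> le (ys ! i) (xs ! i)) \<and>
        (le (xs ! s) (ys ! s) \<and> \<not> le (ys ! s) (xs ! s)))"

definition is_lexmax :: "('a \<Rightarrow> 'a \<Rightarrow> bool) \<Rightarrow> 'a list \<Rightarrow> 'a list \<Rightarrow> bool" where
  "is_lexmax le xs C \<longleftrightarrow>
     C \<in> set (subseqs xs) \<and> (\<forall>D \<in> set (subseqs xs). lex_le le D C)"

text \<open>The recursion of the paper is on (largest symbol - smallest symbol) of AB.
  We implement it with an explicit fuel parameter; the actual relation below
  supplies fuel (max - min + 1) of AB, which is exactly enough: every recursive
  comparison of components X, Y (with all symbols in [n+1, max]) has
  max - min of XY strictly smaller.\<close>

fun word_le_fuel :: "nat \<Rightarrow> word \<Rightarrow> word \<Rightarrow> bool" where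
  "word_le_fuel 0 A B = (A @ B = [])"
| "word_le_fuel (Suc d) A B =
     (if A @ B = [] then True
      else
        (let n = Min (set (A @ B));
             le = word_le_fuel d;
             C = (SOME C. is_lexmax le (split_at_sym n A) C);
             D = (SOME D. is_lexmax le (split_at_sym n B) D)
         in lex_le le C D))"

definition word_le :: "word \<Rightarrow> word \<Rightarrow> bool" (infix "\<preceq>w" 50) where
  "A \<preceq>w B \<longleftrightarrow>
     word_le_fuel (if A @ B = [] then 0 else Max (set (A @ B)) - Min (set (A @ B)) + 1) A B"

definition word_equiv :: "word \<Rightarrow> word \<Rightarrow> bool" (infix "\<sim>w" 50) where
  "A \<sim>w B \<longleftrightarrow> A \<preceq>w B \<and> B \<preceq>w A"

inductive NF :: "word \<Rightarrow> bool" where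
  NF_empty: "NF []"
| NF_step: "\<lbrakk> A \<noteq> []; n = Min (set A); As = split_at_sym n A; 2 \<le> length As;
             \<forall>i. Suc i < length As \<longrightarrow> (As ! Suc i) \<preceq>w (As ! i);
             \<forall>X \<in> set As. NF X \<rbrakk> \<Longrightarrow> NF A"

definition diamond :: "nat \<Rightarrow> word \<Rightarrow> word" where
  "diamond n A = (THE B. NF B \<and> B \<sim>w (A @ [n]))"

end

theory Submission
  imports Defs "HOL-Library.List_Lexorder"
begin



datatype tree = Node "tree list"

fun tle :: "tree \<Rightarrow> tree \<Rightarrow> bool" and lle :: "tree list \<Rightarrow> tree list \<Rightarrow> bool" where
  "tle (Node xs) (Node ys) = lle xs ys"
| "lle [] ys = True"
| "lle (x#xs) [] = False"
| "lle (x#xs) (y#ys) = (if x = y then lle xs ys else tle x y)"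

lemma lle_refl: "lle xs xs" by (induction xs) auto

lemma tle_refl: "tle t t"
  by (cases t) (simp add: lle_refl)

lemma tle_antisym: "tle a b \<Longrightarrow> tle b a \<Longrightarrow> a = b"
proof (induction a arbitrary: b)
  case (Node xs)
  obtain ys where b: "b = Node ys" by (cases b)
  have "lle xs ys \<Longrightarrow> lle ys xs \<Longrightarrow> xs = ys" using Node.IH
  proof (induction xs arbitrary: ys)
    case Nil then show ?case by (cases ys) auto
  next
    case (Cons x xs)
    from Cons.prems(1) obtain y ys' where ys: "ys = y # ys'" by (cases ys) auto
    show ?case
    proof (cases "x = y")
      case True 
      then have "lle xs ys'" "lle ys' xs" using Cons.prems(1,2) ys by auto
      moreover have "\<And>x' b. x' \<in> set xs \<Longrightarrow> tle x' b \<Longrightarrow> tle b x' \<Longrightarrow> x' = b"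
        using Cons.prems(3) by simp
      ultimately have "xs = ys'" using Cons.IH by blast
      then show ?thesis using True ys by simp
    next
      case False 
      then have "tle x y" "tle y x" using Cons.prems(1,2) ys by auto
      then have "x = y" using Cons.prems(3) by simp
      then show ?thesis using False by simp
    qed
  qed
  then show ?case using Node.prems b by simp
qed

lemma tle_trans: "tle a b \<Longrightarrow> tle b c \<Longrightarrow> tle a c"
proof (induction a arbitrary: b c)
  case (Node xs)
  obtain ys where b: "b = Node ys" by (cases b)
  obtain zs where c: "c = Node zs" by (cases c)
  have "lle xs ys \<Longrightarrow> lle ys zs \<Longrightarrow> lle xs zs" using Node.IH
  proof (induction xs arbitrary: ys zs)
    case Nil then show ?case by simp
  next
    case (Cons x xs)
    from Cons.prems(1) obtain y ys' where ys: "ys = y # ys'" by (cases ys) auto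
    from Cons.prems(2) ys obtain z zs' where zs: "zs = z # zs'" by (cases zs) auto
    have IHx: "\<And>b c. tle x b \<Longrightarrow> tle b c \<Longrightarrow> tle x c" using Cons.prems(3) by simp
    show ?case
    proof (cases "x = y")
      case True
      show ?thesis
      proof (cases "y = z")
        case True': True
        have "lle xs ys'" "lle ys' zs'" using Cons.prems(1,2) ys zs True True' by auto
        moreover have "\<And>x' b c. x' \<in> set xs \<Longrightarrow> tle x' b \<Longrightarrow> tle b c \<Longrightarrow> tle x' c"
          using Cons.prems(3) by simp
        ultimately have "lle xs zs'" using Cons.IH by blast
        then show ?thesis using ys zs True True' by simp
      next
        case False
        then show ?thesis using Cons.prems(1,2) ys zs True by simp
      qed
    next
      case False
      show ?thesis
      proof (cases "y = z")
        case True then show ?thesis using Cons.prems(1,2) ys zs False by simp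
      next
        case False': False
        have "tle x y" "tle y z" using Cons.prems(1,2) ys zs False False' by auto
        then have "tle x z" using IHx by blast
        moreover have "x \<noteq> z" using \<open>tle x y\<close> \<open>tle y z\<close> tle_antisym False by blast
        ultimately show ?thesis using ys zs by simp
      qed
    qed
  qed
  then show ?case using Node.prems b c by simp
qed

lemma tle_total: "tle a b \<or> tle b a"
proof (induction a arbitrary: b)
  case (Node xs)
  obtain ys where b: "b = Node ys" by (cases b)
  have "lle xs ys \<or> lle ys xs" using Node.IH
  proof (induction xs arbitrary: ys)
    case Nil then show ?case by simp
  next
    case (Cons x xs)
    show ?case
    proof (cases ys)
      case Nil then show ?thesis by simp
    next
      case (Cons y ys')
      show ?thesis
      proof (cases "x = y")
        case True
        have "\<And>x' b. x' \<in> set xs \<Longrightarrow> tle x' b \<or> tle b x'" using Cons.prems by simp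
        then have "lle xs ys' \<or> lle ys' xs" using Cons.IH by blast
        then show ?thesis using True Cons by auto
      next
        case False
        have "tle x y \<or> tle y x" using Cons.prems by simp
        then show ?thesis using False Cons by auto
      qed
    qed
  qed
  then show ?case using b by simp
qed

instantiation tree :: linorder
begin
definition less_eq_tree where "less_eq_tree = tle"
definition less_tree where "less_tree a b = (tle a b \<and> \<not> tle b a)"
instance
proof
  fix x y z :: tree
  show "(x < y) = (x \<le> y \<and> \<not> y \<le> x)" by (simp add: less_eq_tree_def less_tree_def)
  show "x \<le> x" by (simp add: less_eq_tree_def tle_refl)
  show "x \<le> y \<Longrightarrow> y \<le> z \<Longrightarrow> x \<le> z" unfolding less_eq_tree_def by (rule tle_trans)
  show "x \<le> y \<Longrightarrow> y \<le> x \<Longrightarrow> x = y" unfolding less_eq_tree_def by (rule tle_antisym)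
  show "x \<le> y \<or> y \<le> x" unfolding less_eq_tree_def by (rule tle_total)
qed
end

lemma lle_iff: "lle xs ys \<longleftrightarrow> xs \<le> ys"
proof (induction xs arbitrary: ys)
  case Nil then show ?case by simp
next
  case (Cons x xs)
  show ?case
  proof (cases ys)
    case Nil then show ?thesis by simp
  next
    case (Cons y ys')
    then show ?thesis using Cons.IH
    proof (cases "x = y")
      case True then show ?thesis using Cons.IH Cons by simp
    next
      case False
      then show ?thesis using Cons by (auto simp: less_eq_tree_def less_tree_def dest: tle_antisym)
    qed
  qed
qed

lemma Node_le[simp]: "Node xs \<le> Node ys \<longleftrightarrow> xs \<le> ys"
  by (simp add: less_eq_tree_def lle_iff)

lemma Node_Nil_le[simp]: "Node [] \<le> t"
  by (cases t) simp

lemma le_Node_Nil[simp]: "t \<le> Node [] \<longleftrightarrow> t = Node []"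
  by (cases t) simp




lemma split_ne[simp]: "split_at_sym n A \<noteq> []"
  by (induction A) (auto split: list.split)

lemma split_Cons_neq: "x \<noteq> n \<Longrightarrow> split_at_sym n (x # xs) = (x # hd (split_at_sym n xs)) # tl (split_at_sym n xs)"
  using split_ne[of n xs] by (auto split: list.split)

lemma split_notin: "n \<notin> set A \<Longrightarrow> split_at_sym n A = [A]"
  by (induction A) (auto simp: split_Cons_neq)

lemma split_set: "X \<in> set (split_at_sym n A) \<Longrightarrow> set X \<subseteq> set A \<and> n \<notin> set X"
proof (induction A arbitrary: X)
  case Nil then show ?case by simp
next
  case (Cons x xs)
  show ?case
  proof (cases "x = n")
    case True then show ?thesis using Cons by auto
  next
    case False
    have "X = x # hd (split_at_sym n xs) \<or> X \<in> set (tl (split_at_sym n xs))"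
      using Cons.prems unfolding split_Cons_neq[OF False] by auto
    moreover have "hd (split_at_sym n xs) \<in> set (split_at_sym n xs)" by simp
    moreover have "\<And>Y. Y \<in> set (tl (split_at_sym n xs)) \<Longrightarrow> Y \<in> set (split_at_sym n xs)"
      by (metis list.set_sel(2) split_ne)
    ultimately show ?thesis using Cons.IH False by fastforce
  qed
qed

lemma split_len: "sum_list (map length (split_at_sym n A)) + length (split_at_sym n A) = length A + 1"
proof (induction A)
  case Nil then show ?case by simp
next
  case (Cons x xs)
  show ?case
  proof (cases "x = n")
    case True then show ?thesis using Cons by simp
  next
    case False
    obtain Y Ys where e: "split_at_sym n xs = Y # Ys" using split_ne by (cases "split_at_sym n xs") auto
    then show ?thesis using Cons False by (simp add: split_Cons_neq)
  qed
qed

lemma split_len2: "n \<in> set A \<Longrightarrow> 2 \<le> length (split_at_sym n A)"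
proof (induction A)
  case Nil then show ?case by simp
next
  case (Cons x xs)
  show ?case
  proof (cases "x = n")
    case True then show ?thesis using split_ne[of n xs] by (cases "split_at_sym n xs") auto
  next
    case False then show ?thesis using Cons unfolding split_Cons_neq[OF False] by simp
  qed
qed

lemma split_shorter: "X \<in> set (split_at_sym n A) \<Longrightarrow> n \<in> set A \<Longrightarrow> length X < length A"
proof -
  assume X: "X \<in> set (split_at_sym n A)" and n: "n \<in> set A"
  have "length X \<le> sum_list (map length (split_at_sym n A))"
    using X by (simp add: member_le_sum_list)
  then show ?thesis using split_len[of n A] split_len2[OF n] by linarith
qed

lemma split_snoc_eq: "split_at_sym n (A @ [n]) = split_at_sym n A @ [[]]"
proof (induction A)
  case Nil then show ?case by simp
next
  case (Cons x xs)
  obtain Y Ys where e: "split_at_sym n xs = Y # Ys" using split_ne by (cases "split_at_sym n xs") auto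
  show ?case using Cons e by (cases "x = n") (simp_all add: split_Cons_neq)
qed

lemma split_snoc_neq: "m \<noteq> n \<Longrightarrow>
  split_at_sym n (A @ [m]) = butlast (split_at_sym n A) @ [last (split_at_sym n A) @ [m]]"
proof (induction A)
  case Nil then show ?case by simp
next
  case (Cons x xs)
  obtain Y Ys where e: "split_at_sym n xs = Y # Ys" using split_ne by (cases "split_at_sym n xs") auto
  show ?case
  proof (cases "x = n")
    case True then show ?thesis using Cons e by simp
  next
    case False
    have "split_at_sym n (x # xs @ [m]) = (x # hd (split_at_sym n (xs @ [m]))) # tl (split_at_sym n (xs @ [m]))"
      using False by (rule split_Cons_neq)
    then show ?thesis using Cons e False by (cases Ys) (simp_all add: split_Cons_neq)
  qed
qed

fun join :: "nat \<Rightarrow> word list \<Rightarrow> word" where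
  "join n [] = []"
| "join n [X] = X"
| "join n (X # Y # Xs) = X @ n # join n (Y # Xs)"

lemma split_append_notin: "n \<notin> set X \<Longrightarrow>
   split_at_sym n (X @ n # B) = X # split_at_sym n B"
  by (induction X) (auto simp: split_Cons_neq)

lemma split_join: "Xs \<noteq> [] \<Longrightarrow> \<forall>X\<in>set Xs. n \<notin> set X \<Longrightarrow> split_at_sym n (join n Xs) = Xs"
  by (induction n Xs rule: join.induct) (auto simp: split_notin split_append_notin)

lemma join_split: "join n (split_at_sym n A) = A"
proof (induction A)
  case Nil then show ?case by simp
next
  case (Cons x xs)
  obtain Y Ys where e: "split_at_sym n xs = Y # Ys" using split_ne by (cases "split_at_sym n xs") auto
  show ?case
  proof (cases "x = n")
    case True then show ?thesis using Cons e by simp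
  next
    case False then show ?thesis using Cons e by (cases Ys) (simp_all add: split_Cons_neq)
  qed
qed

lemma set_join: "set (join n Xs) \<subseteq> insert n (\<Union>X\<in>set Xs. set X)"
  by (induction n Xs rule: join.induct) auto

lemma in_join: "2 \<le> length Xs \<Longrightarrow> n \<in> set (join n Xs)"
  by (induction n Xs rule: join.induct) auto

fun filtby :: "('a \<Rightarrow> 'b::linorder) \<Rightarrow> 'a list \<Rightarrow> 'a list" where
  "filtby f [] = []"
| "filtby f (x # xs) = (if \<forall>y\<in>set xs. f y \<le> f x then x # filtby f xs else filtby f xs)"

fun filt :: "'b::linorder list \<Rightarrow> 'b list" where
  "filt [] = []"
| "filt (x # xs) = (if \<forall>y\<in>set xs. y \<le> x then x # filt xs else filt xs)"

definition maxsym :: "word \<Rightarrow> nat" where "maxsym A = Max (insert 0 (set A))"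

lemma maxsym_ge: "x \<in> set A \<Longrightarrow> x \<le> maxsym A"
  by (simp add: maxsym_def)

lemma maxsym_mono: "set X \<subseteq> set A \<Longrightarrow> maxsym X \<le> maxsym A"
  unfolding maxsym_def by (rule Max_mono) auto

function val :: "nat \<Rightarrow> word \<Rightarrow> tree" where
  "val m A = (if A = [] \<or> (\<exists>x\<in>set A. x < m) then Node []
              else Node (filt (map (val (Suc m)) (split_at_sym m A))))"
  by auto
termination
proof (relation "measure (\<lambda>(m, A). length A + (maxsym A - m))", simp, clarsimp)
  fix m A X
  assume ne: "A \<noteq> []" and ge: "\<forall>x\<in>set A. \<not> x < m" and X: "X \<in> set (split_at_sym m A)"
  show "length X + (maxsym X - Suc m) < length A + (maxsym A - m)"
  proof (cases "m \<in> set A")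
    case True
    have "length X < length A" using split_shorter[OF X True] .
    moreover have "maxsym X \<le> maxsym A" using split_set[OF X] maxsym_mono by blast
    ultimately show ?thesis by linarith
  next
    case False
    then have "X = A" using X split_notin by simp
    obtain a where "a \<in> set A" using ne by (cases A) auto
    then have "m < maxsym A" using ge False maxsym_ge[of a A]
      by (metis le_less_trans linorder_not_less order_le_less)
    then show ?thesis using \<open>X = A\<close> by simp
  qed
qed

declare val.simps[simp del]





lemma filt_map: "map f (filtby f xs) = filt (map f xs)"
  by (induction xs) auto

lemma filtby_subseqs: "filtby f xs \<in> set (subseqs xs)"
  by (induction xs) (auto simp: Let_def)

lemma filtby_set: "set (filtby f xs) \<subseteq> set xs"
  by (induction xs) auto

lemma filtby_ne: "xs \<noteq> [] \<Longrightarrow> filtby f xs \<noteq> []"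
proof (induction xs)
  case (Cons x xs) then show ?case by (cases xs) auto
qed simp

lemma filt_set: "set (filt xs) \<subseteq> set xs"
  by (induction xs) auto

lemma filt_ne: "xs \<noteq> [] \<Longrightarrow> filt xs \<noteq> []"
proof (induction xs)
  case (Cons x xs) then show ?case by (cases xs) auto
qed simp

lemma filt_hd_max: "xs \<noteq> [] \<Longrightarrow> \<forall>y\<in>set xs. y \<le> hd (filt xs)"
proof (induction xs)
  case Nil then show ?case by simp
next
  case (Cons x xs)
  show ?case
  proof (cases "\<forall>y\<in>set xs. y \<le> x")
    case True then show ?thesis by simp
  next
    case False
    then obtain w where w: "w \<in> set xs" "\<not> w \<le> x" by auto
    then have ne: "xs \<noteq> []" by auto
    then have "\<forall>y\<in>set xs. y \<le> hd (filt xs)" using Cons.IH by simp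
    moreover have "x \<le> hd (filt xs)" using w calculation by force
    ultimately show ?thesis using False by simp
  qed
qed

lemma filt_sorted: "sorted_wrt (\<ge>) (filt xs)"
proof (induction xs)
  case Nil then show ?case by simp
next
  case (Cons x xs)
  have "set (filt xs) \<subseteq> set xs" by (rule filt_set)
  then show ?case using Cons by auto
qed

lemma sorted_le_Cons: fixes L :: "'a::linorder list" shows "sorted_wrt (\<ge>) L \<Longrightarrow> \<forall>a\<in>set L. a \<le> y \<Longrightarrow> L \<le> y # L"
proof (induction L arbitrary: y)
  case Nil then show ?case by simp
next
  case (Cons a L)
  show ?case
  proof (cases "a < y")
    case True then show ?thesis by simp
  next
    case False
    then have "y \<le> a" by simp
    moreover have "a \<le> y" using Cons.prems(2) by simp
    ultimately have "a = y" by (rule antisym[rotated])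
    moreover have "L \<le> a # L" using Cons by simp
    ultimately show ?thesis by simp
  qed
qed

lemma filt_max: "Z \<in> set (subseqs xs) \<Longrightarrow> Z \<le> filt xs"
proof (induction xs arbitrary: Z)
  case Nil then show ?case by simp
next
  case (Cons x xs)
  have Z: "(\<exists>Z'. Z = x # Z' \<and> Z' \<in> set (subseqs xs)) \<or> Z \<in> set (subseqs xs)"
  proof -
    have "set (subseqs (x#xs)) = (Cons x) ` set (subseqs xs) \<union> set (subseqs xs)" by (simp add: Let_def)
    then show ?thesis using Cons.prems by blast
  qed
  show ?case
  proof (cases "\<forall>y\<in>set xs. y \<le> x")
    case True
    have fx: "filt (x # xs) = x # filt xs" using True by simp
    have "\<forall>a\<in>set (filt xs). a \<le> x" using True filt_set[of xs] by blast
    then have "filt xs \<le> x # filt xs" by (rule sorted_le_Cons[OF filt_sorted])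
    show ?thesis
    proof (cases "\<exists>Z'. Z = x # Z' \<and> Z' \<in> set (subseqs xs)")
      case True
      then obtain Z' where "Z = x # Z'" "Z' \<in> set (subseqs xs)" by blast
      then show ?thesis using Cons.IH fx by simp
    next
      case False
      then have "Z \<in> set (subseqs xs)" using Z by blast
      then have "Z \<le> filt xs" using Cons.IH by blast
      then show ?thesis using fx \<open>filt xs \<le> x # filt xs\<close> by simp
    qed
  next
    case False
    then obtain w where w: "w \<in> set xs" "x < w" by auto
    then have ne: "xs \<noteq> []" by auto
    have "w \<le> hd (filt xs)" using filt_hd_max[OF ne] w(1) by blast
    then have "x < hd (filt xs)" using w(2) by (rule less_le_trans[rotated])
    moreover obtain h t where "filt xs = h # t" using filt_ne[OF ne] by (cases "filt xs") auto
    ultimately have "\<forall>Z'. x # Z' \<le> filt xs" by simp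
    have fx: "filt (x # xs) = filt xs" using False by simp
    show ?thesis
    proof (cases "\<exists>Z'. Z = x # Z' \<and> Z' \<in> set (subseqs xs)")
      case True
      then obtain Z' where "Z = x # Z'" by blast
      then show ?thesis using fx \<open>\<forall>Z'. x # Z' \<le> filt xs\<close> by simp
    next
      case False
      then have "Z \<in> set (subseqs xs)" using Z by blast
      then show ?thesis using Cons.IH fx by simp
    qed
  qed
qed

lemma filt_snoc: "filt (ys @ [z]) = filter (\<lambda>y. z \<le> y) (filt ys) @ [z]"
  by (induction ys) auto

lemma filt_sorted_id: "sorted_wrt (\<ge>) xs \<Longrightarrow> filt xs = xs"
  by (induction xs) auto

lemma map_subseqs: "C \<in> set (subseqs xs) \<Longrightarrow> map f C \<in> set (subseqs (map f xs))"
  by (induction xs arbitrary: C) (auto simp: Let_def)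

lemma subseqs_set: "C \<in> set (subseqs xs) \<Longrightarrow> set C \<subseteq> set xs"
proof -
  assume "C \<in> set (subseqs xs)"
  then have "set C \<in> set ` set (subseqs xs)" by blast
  then show ?thesis using subseqs_powset[of xs] by blast
qed

lemma filt_single: "ys \<noteq> [] \<Longrightarrow> length (filt (ys @ [z])) = 1 \<Longrightarrow> \<forall>y\<in>set ys. y < z"
proof -
  assume ne: "ys \<noteq> []" and l: "length (filt (ys @ [z])) = 1"
  then have "filter (\<lambda>y. z \<le> y) (filt ys) = []" by (simp add: filt_snoc)
  moreover obtain h t where ht: "filt ys = h # t" using filt_ne[OF ne] by (cases "filt ys") auto
  ultimately have "h < z" by (cases "z \<le> h") auto
  then show ?thesis using filt_hd_max[OF ne] ht by force
qed




lemma lex_le_Nil: "lex_le le [] ys"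
  by (simp add: lex_le_def)

lemma lex_le_Cons_Nil: "\<not> lex_le le (x # xs) []"
  by (simp add: lex_le_def)

lemma lex_le_Cons: "lex_le le (x # xs) (y # ys) \<longleftrightarrow>
   (le x y \<and> \<not> le y x) \<or> (le x y \<and> le y x \<and> lex_le le xs ys)"
proof
  assume "lex_le le (x # xs) (y # ys)"
  then consider
    (a) "length xs \<le> length ys" "\<forall>i<Suc (length xs). le ((x#xs) ! i) ((y#ys) ! i) \<and> le ((y#ys) ! i) ((x#xs) ! i)"
  | (b) s where "s < Suc (min (length xs) (length ys))"
      "\<forall>i<s. le ((x#xs) ! i) ((y#ys) ! i) \<and> le ((y#ys) ! i) ((x#xs) ! i)"
      "le ((x#xs) ! s) ((y#ys) ! s) \<and> \<not> le ((y#ys) ! s) ((x#xs) ! s)"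
    unfolding lex_le_def by auto
  then show "(le x y \<and> \<not> le y x) \<or> (le x y \<and> le y x \<and> lex_le le xs ys)"
  proof cases
    case a
    have 0: "le x y \<and> le y x" using a(2) by (metis nth_Cons_0 zero_less_Suc)
    have "\<forall>i<length xs. le (xs ! i) (ys ! i) \<and> le (ys ! i) (xs ! i)"
      using a(2) by (metis Suc_mono nth_Cons_Suc)
    then show ?thesis using 0 a(1) by (simp add: lex_le_def)
  next
    case (b s)
    show ?thesis
    proof (cases s)
      case 0 then show ?thesis using b by simp
    next
      case (Suc s')
      have 0: "le x y \<and> le y x" using b(2) Suc by (metis nth_Cons_0 zero_less_Suc)
      have "\<forall>i<s'. le (xs ! i) (ys ! i) \<and> le (ys ! i) (xs ! i)"
        using b(2) Suc by (metis Suc_mono nth_Cons_Suc)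
      moreover have "s' < min (length xs) (length ys)" using b(1) Suc by simp
      moreover have "le (xs ! s') (ys ! s') \<and> \<not> le (ys ! s') (xs ! s')" using b(3) Suc by simp
      ultimately have "lex_le le xs ys" unfolding lex_le_def by blast
      then show ?thesis using 0 by simp
    qed
  qed
next
  assume h: "(le x y \<and> \<not> le y x) \<or> (le x y \<and> le y x \<and> lex_le le xs ys)"
  show "lex_le le (x # xs) (y # ys)"
  proof (cases "le x y \<and> \<not> le y x")
    case True
    then show ?thesis unfolding lex_le_def by (intro disjI2 exI[of _ 0]) simp
  next
    case False
    then have 0: "le x y" "le y x" "lex_le le xs ys" using h by auto
    from 0(3) consider
      (a) "length xs \<le> length ys" "\<forall>i<length xs. le (xs ! i) (ys ! i) \<and> le (ys ! i) (xs ! i)"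
    | (b) s where "s < min (length xs) (length ys)"
        "\<forall>i<s. le (xs ! i) (ys ! i) \<and> le (ys ! i) (xs ! i)"
        "le (xs ! s) (ys ! s) \<and> \<not> le (ys ! s) (xs ! s)"
      unfolding lex_le_def by auto
    then show ?thesis
    proof cases
      case a
      have "\<forall>i<length (x#xs). le ((x#xs) ! i) ((y#ys) ! i) \<and> le ((y#ys) ! i) ((x#xs) ! i)"
        using a 0 by (auto simp: nth_Cons split: nat.split)
      then show ?thesis using a(1) unfolding lex_le_def by simp
    next
      case (b s)
      have "\<forall>i<Suc s. le ((x#xs) ! i) ((y#ys) ! i) \<and> le ((y#ys) ! i) ((x#xs) ! i)"
        using b 0 by (auto simp: nth_Cons split: nat.split)
      moreover have "Suc s < min (length (x#xs)) (length (y#ys))" using b(1) by simp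
      moreover have "le ((x#xs) ! Suc s) ((y#ys) ! Suc s) \<and> \<not> le ((y#ys) ! Suc s) ((x#xs) ! Suc s)"
        using b(3) by simp
      ultimately show ?thesis unfolding lex_le_def by blast
    qed
  qed
qed

lemma lex_le_map:
  fixes f :: "'a \<Rightarrow> 'b::linorder"
  assumes "\<forall>x\<in>set xs \<union> set ys. \<forall>y\<in>set xs \<union> set ys. le x y \<longleftrightarrow> f x \<le> f y"
  shows "lex_le le xs ys \<longleftrightarrow> map f xs \<le> map f ys"
  using assms
proof (induction xs arbitrary: ys)
  case Nil then show ?case by (simp add: lex_le_Nil)
next
  case (Cons x xs)
  show ?case
  proof (cases ys)
    case Nil then show ?thesis by (simp add: lex_le_Cons_Nil)
  next
    case (Cons y ys')
    have h: "le x y \<longleftrightarrow> f x \<le> f y" "le y x \<longleftrightarrow> f y \<le> f x" using Cons.prems Cons by auto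
    have "lex_le le xs ys' \<longleftrightarrow> map f xs \<le> map f ys'"
      using Cons.IH Cons.prems Cons by auto
    then show ?thesis using Cons h by (auto simp: lex_le_Cons)
  qed
qed




definition inS :: "nat \<Rightarrow> word \<Rightarrow> bool" where "inS m A \<longleftrightarrow> (\<forall>x\<in>set A. m \<le> x)"

definition kids :: "nat \<Rightarrow> word \<Rightarrow> tree list" where
  "kids m A = filt (map (val (Suc m)) (split_at_sym m A))"

lemma val_Nil[simp]: "val m [] = Node []"
  by (simp add: val.simps)

lemma val_kids: "inS m A \<Longrightarrow> A \<noteq> [] \<Longrightarrow> val m A = Node (kids m A)"
  unfolding inS_def kids_def by (subst val.simps) (auto simp: not_less)

lemma kids_ne: "kids m A \<noteq> []"
  unfolding kids_def by (rule filt_ne) simp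

lemma val_ne: "inS m A \<Longrightarrow> A \<noteq> [] \<Longrightarrow> val m A \<noteq> Node []"
proof -
  assume a: "inS m A" "A \<noteq> []"
  have "val m A = Node (kids m A)" by (rule val_kids[OF a])
  moreover have "kids m A \<noteq> []" by (rule kids_ne)
  ultimately show ?thesis by simp
qed

lemma inS_split: "inS m A \<Longrightarrow> X \<in> set (split_at_sym m A) \<Longrightarrow> inS (Suc m) X"
  unfolding inS_def
proof
  fix x assume a: "\<forall>x\<in>set A. m \<le> x" and X: "X \<in> set (split_at_sym m A)" and x: "x \<in> set X"
  have "x \<in> set A" "x \<noteq> m" using split_set[OF X] x by auto
  with a show "Suc m \<le> x" by fastforce
qed

lemma inS_Suc: "inS m A \<Longrightarrow> m \<notin> set A \<Longrightarrow> inS (Suc m) A"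
  unfolding inS_def
proof
  fix x assume a: "\<forall>x\<in>set A. m \<le> x" "m \<notin> set A" and x: "x \<in> set A"
  then have "m \<le> x" "x \<noteq> m" by auto
  then show "Suc m \<le> x" by simp
qed

lemma kids_notin: "m \<notin> set A \<Longrightarrow> kids m A = [val (Suc m) A]"
  unfolding kids_def by (simp add: split_notin)

lemma val_shift:
  assumes "inS m A" "inS m B" "m \<notin> set (A @ B)"
  shows "val m A \<le> val m B \<longleftrightarrow> val (Suc m) A \<le> val (Suc m) B"
proof (cases "A = []")
  case True then show ?thesis by simp
next
  case False
  have A: "val m A = Node [val (Suc m) A]" using val_kids[OF assms(1) False] kids_notin assms(3) by simp
  have A': "val (Suc m) A \<noteq> Node []" using val_ne[OF inS_Suc[OF assms(1)] False] assms(3) by simp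
  show ?thesis
  proof (cases "B = []")
    case True then show ?thesis using A A' by simp
  next
    case False
    have B: "val m B = Node [val (Suc m) B]" using val_kids[OF assms(2) False] kids_notin assms(3) by simp
    show ?thesis using A B by (auto simp: less_le)
  qed
qed

lemma val_shift_Min:
  assumes "A @ B \<noteq> []" "m \<le> Min (set (A @ B))"
  shows "val m A \<le> val m B \<longleftrightarrow> val (Min (set (A @ B))) A \<le> val (Min (set (A @ B))) B"
  using assms
proof (induction "Min (set (A @ B)) - m" arbitrary: m)
  case 0
  then have "m = Min (set (A @ B))" by linarith
  then show ?case by simp
next
  case (Suc k)
  have lt: "m < Min (set (A @ B))" using Suc.hyps(2) by linarith
  have mx: "m < x" if "x \<in> set (A @ B)" for x
  proof -
    have "Min (set (A @ B)) \<le> x" by (rule Min_le) (use that in auto)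
    then show ?thesis using lt by linarith
  qed
  have inS: "inS m A" "inS m B" using mx by (auto simp: inS_def less_imp_le)
  have notin: "m \<notin> set (A @ B)" using mx by blast
  have "val m A \<le> val m B \<longleftrightarrow> val (Suc m) A \<le> val (Suc m) B" by (rule val_shift[OF inS notin])
  also have "\<dots> \<longleftrightarrow> val (Min (set (A @ B))) A \<le> val (Min (set (A @ B))) B"
  proof (rule Suc.hyps(1)[of "Suc m"])
    show "k = Min (set (A @ B)) - Suc m" using Suc.hyps(2) by linarith
    show "A @ B \<noteq> []" by (rule Suc.prems(1))
    show "Suc m \<le> Min (set (A @ B))" using lt by simp
  qed
  finally show ?case .
qed

lemma kids_not_single:
  assumes "inS n A" "n \<in> set A"
  shows "kids n A \<noteq> [Node []]"
proof
  assume k: "kids n A = [Node []]"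
  have l2: "2 \<le> length (split_at_sym n A)" using split_len2[OF assms(2)] .
  obtain ys z where yz: "split_at_sym n A = ys @ [z]"
    using split_ne[of n A] by (metis rev_exhaust)
  have ne: "ys \<noteq> []" using l2 yz by auto
  let ?f = "val (Suc n)"
  have k2: "filt (map ?f ys @ [?f z]) = [Node []]" using k yz by (simp add: kids_def)
  then have "?f z = Node []" by (simp add: filt_snoc)
  moreover have "\<forall>y\<in>set (map ?f ys). y < ?f z"
    using filt_single[of "map ?f ys" "?f z"] ne k2 by simp
  moreover obtain y where "y \<in> set (map ?f ys)" using ne by (cases ys) auto
  ultimately show False using Node_Nil_le[of y] by (simp add: not_le[symmetric])
qed

lemma val_kids_cmp:
  assumes "inS n A" "inS n B" "n \<in> set (A @ B)"
  shows "val n A \<le> val n B \<longleftrightarrow> kids n A \<le> kids n B"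
proof (cases "A = []")
  case True
  then have "n \<in> set B" "B \<noteq> []" using assms(3) by auto
  then obtain k ks where kB: "kids n B = k # ks" using kids_ne by (cases "kids n B") auto
  have "kids n [] = [Node []]" by (simp add: kids_def)
  moreover have "Node [] \<le> k" by simp
  ultimately have "kids n A \<le> kids n B" using True kB
    by (cases "Node [] = k") (simp_all add: less_le)
  moreover have "val n A \<le> val n B" using True by simp
  ultimately show ?thesis by simp
next
  case False
  note A = this
  show ?thesis
  proof (cases "B = []")
    case True
    then have "n \<in> set A" using assms(3) by auto
    have "kids n A \<noteq> [Node []]" by (rule kids_not_single[OF assms(1) \<open>n \<in> set A\<close>])
    moreover obtain k ks where kA: "kids n A = k # ks" using kids_ne by (cases "kids n A") auto
    moreover have "kids n [] = [Node []]" by (simp add: kids_def)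
    ultimately have "\<not> kids n A \<le> kids n B" using True by (auto simp: not_less)
    moreover have "\<not> val n A \<le> val n B" using True val_ne[OF assms(1) A] by simp
    ultimately show ?thesis by simp
  next
    case False
    then show ?thesis using val_kids[OF assms(1) A] val_kids[OF assms(2) False] by simp
  qed
qed




lemma wlf_nil: "word_le_fuel d [] []"
  by (cases d) simp_all

lemma lexmax_char:
  fixes f :: "'a \<Rightarrow> 'b::linorder"
  assumes E: "\<forall>X\<in>set xs. \<forall>Y\<in>set xs. le X Y \<longleftrightarrow> f X \<le> f Y"
  shows "\<exists>C. is_lexmax le xs C"
    and "is_lexmax le xs C \<Longrightarrow> map f C = filt (map f xs)"
proof -
  let ?C0 = "filtby f xs"
  have C0: "?C0 \<in> set (subseqs xs)" by (rule filtby_subseqs)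
  have cmp: "lex_le le D C \<longleftrightarrow> map f D \<le> map f C"
    if "D \<in> set (subseqs xs)" "C \<in> set (subseqs xs)" for D C
  proof (rule lex_le_map)
    have "set D \<subseteq> set xs" "set C \<subseteq> set xs" using that subseqs_set by auto
    then show "\<forall>x\<in>set D \<union> set C. \<forall>y\<in>set D \<union> set C. le x y = (f x \<le> f y)" using E by blast
  qed
  have "is_lexmax le xs ?C0"
    unfolding is_lexmax_def
  proof (intro conjI ballI)
    show "?C0 \<in> set (subseqs xs)" by (rule C0)
    fix D assume D: "D \<in> set (subseqs xs)"
    have "map f D \<le> filt (map f xs)" by (rule filt_max[OF map_subseqs[OF D]])
    then show "lex_le le D ?C0" using cmp[OF D C0] filt_map[of f xs] by simp
  qed
  then show "\<exists>C. is_lexmax le xs C" by blast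
  assume C: "is_lexmax le xs C"
  then have Cs: "C \<in> set (subseqs xs)" and "lex_le le ?C0 C" unfolding is_lexmax_def using C0 by auto
  then have 1: "filt (map f xs) \<le> map f C" using cmp[OF C0 Cs] filt_map[of f xs] by simp
  have 2: "map f C \<le> filt (map f xs)" by (rule filt_max[OF map_subseqs[OF Cs]])
  show "map f C = filt (map f xs)" using 1 2 by simp
qed

lemma Min_le_app: "x \<in> set (A @ B) \<Longrightarrow> Min (set (A @ B)) \<le> x"
  by (rule Min_le) auto

lemma le_Max_app: "x \<in> set (A @ B) \<Longrightarrow> x \<le> Max (set (A @ B))"
  by (rule Max_ge) auto

lemma bridge:
  "A @ B \<noteq> [] \<Longrightarrow> Max (set (A @ B)) - Min (set (A @ B)) + 1 \<le> d \<Longrightarrow>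
   word_le_fuel d A B = (val (Min (set (A @ B))) A \<le> val (Min (set (A @ B))) B)"
proof (induction d arbitrary: A B)
  case 0 then show ?case by simp
next
  case (Suc d)
  define n where "n = Min (set (A @ B))"
  define le where "le = word_le_fuel d"
  define f where "f = val (Suc n)"
  have nin: "n \<in> set (A @ B)" unfolding n_def using Suc.prems(1) by (intro Min_in) auto
  have inSA: "inS n A" and inSB: "inS n B" unfolding inS_def n_def using Min_le_app by auto
  let ?U = "set (split_at_sym n A) \<union> set (split_at_sym n B)"
  have Usub: "set X \<subseteq> set (A @ B) \<and> n \<notin> set X \<and> inS (Suc n) X" if "X \<in> ?U" for X
    using that split_set inS_split[OF inSA] inS_split[OF inSB] by auto
  have E: "le X Y \<longleftrightarrow> f X \<le> f Y" if X: "X \<in> ?U" and Y: "Y \<in> ?U" for X Y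
  proof (cases "X @ Y = []")
    case True then show ?thesis by (simp add: le_def wlf_nil)
  next
    case False
    have sX: "set X \<subseteq> set (A @ B)" "inS (Suc n) X" and sY: "set Y \<subseteq> set (A @ B)" "inS (Suc n) Y"
      using Usub[OF X] Usub[OF Y] by auto
    have mn: "Suc n \<le> Min (set (X @ Y))"
      using False sX(2) sY(2) by (auto simp: inS_def)
    have mx: "Max (set (X @ Y)) \<le> Max (set (A @ B))"
    proof -
      have "Max (set (X @ Y)) \<in> set (X @ Y)" using False by (intro Max_in) auto
      then have "Max (set (X @ Y)) \<in> set (A @ B)" using sX sY by auto
      then show ?thesis by (rule le_Max_app)
    qed
    have "Min (set (X @ Y)) \<in> set (X @ Y)" using False by (intro Min_in) auto
    then have mm: "Min (set (X @ Y)) \<le> Max (set (X @ Y))" by (intro Max_ge) auto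
    have fuel: "Max (set (X @ Y)) - Min (set (X @ Y)) + 1 \<le> d"
      using Suc.prems(2) mn mx mm unfolding n_def by linarith
    have "le X Y = (val (Min (set (X @ Y))) X \<le> val (Min (set (X @ Y))) Y)"
      unfolding le_def by (rule Suc.IH[OF False fuel])
    also have "\<dots> = (f X \<le> f Y)" unfolding f_def using val_shift_Min[OF False mn] by simp
    finally show ?thesis .
  qed
  have EA: "\<forall>X\<in>set (split_at_sym n A). \<forall>Y\<in>set (split_at_sym n A). le X Y \<longleftrightarrow> f X \<le> f Y"
    using E by blast
  have EB: "\<forall>X\<in>set (split_at_sym n B). \<forall>Y\<in>set (split_at_sym n B). le X Y \<longleftrightarrow> f X \<le> f Y"
    using E by blast
  define C where "C = (SOME C. is_lexmax le (split_at_sym n A) C)"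
  define D where "D = (SOME D. is_lexmax le (split_at_sym n B) D)"
  have lC: "is_lexmax le (split_at_sym n A) C"
    unfolding C_def by (rule someI_ex[OF lexmax_char(1)[OF EA]])
  have lD: "is_lexmax le (split_at_sym n B) D"
    unfolding D_def by (rule someI_ex[OF lexmax_char(1)[OF EB]])
  have mC: "map f C = kids n A" using lexmax_char(2)[OF EA lC] by (simp add: kids_def f_def)
  have mD: "map f D = kids n B" using lexmax_char(2)[OF EB lD] by (simp add: kids_def f_def)
  have sC: "set C \<subseteq> set (split_at_sym n A)" using lC subseqs_set by (auto simp: is_lexmax_def)
  have sD: "set D \<subseteq> set (split_at_sym n B)" using lD subseqs_set by (auto simp: is_lexmax_def)
  have "word_le_fuel (Suc d) A B = lex_le le C D"
    unfolding word_le_fuel.simps(2) Let_def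
    using Suc.prems(1) by (simp only: if_False n_def[symmetric] le_def[symmetric] C_def[symmetric] D_def[symmetric])
  also have "\<dots> = (map f C \<le> map f D)"
    by (rule lex_le_map) (use E sC sD in blast)
  also have "\<dots> = (val n A \<le> val n B)" using mC mD val_kids_cmp[OF inSA inSB nin] by simp
  finally show ?case unfolding n_def .
qed

lemma word_le_val: "inS m A \<Longrightarrow> inS m B \<Longrightarrow> (A \<preceq>w B) = (val m A \<le> val m B)"
proof (cases "A @ B = []")
  case True then show ?thesis by (simp add: word_le_def)
next
  case False
  assume "inS m A" "inS m B"
  then have mle: "m \<le> Min (set (A @ B))" using False by (auto simp: inS_def)
  have "(A \<preceq>w B) = (val (Min (set (A @ B))) A \<le> val (Min (set (A @ B))) B)"
    unfolding word_le_def using False by (simp add: bridge)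
  also have "\<dots> = (val m A \<le> val m B)" using val_shift_Min[OF False mle] by simp
  finally show ?thesis .
qed

lemma inS0: "inS 0 A" by (simp add: inS_def)

lemma word_equiv_val: "(A \<sim>w B) = (val 0 A = val 0 B)"
  unfolding word_equiv_def using word_le_val[OF inS0 inS0] by (auto intro: antisym)




lemma le_append_self: fixes xs :: "'a::linorder list" shows "xs \<le> xs @ ys"
  by (induction xs) auto

lemma filter_mono_le:
  fixes a b :: "'a::linorder"
  assumes "a \<le> b"
  shows "filter (\<lambda>y. a \<le> y) P @ [a] \<le> filter (\<lambda>y. b \<le> y) P @ [b]"
proof (induction P)
  case Nil then show ?case using assms by (simp add: less_le)
next
  case (Cons p P)
  show ?case
  proof (cases "b \<le> p")
    case True then show ?thesis using assms Cons by auto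
  next
    case False
    show ?thesis
    proof (cases "a \<le> p")
      case True
      obtain h t where ht: "filter (\<lambda>y. b \<le> y) P @ [b] = h # t" by (cases "filter (\<lambda>y. b \<le> y) P @ [b]") auto
      have "b \<le> h"
      proof -
        have "h \<in> set (filter (\<lambda>y. b \<le> y) P @ [b])" using ht by simp
        then show ?thesis by auto
      qed
      then have "p < h" using False by simp
      then show ?thesis using True False ht by simp
    next
      case False': False
      then show ?thesis using False Cons by simp
    qed
  qed
qed

lemma filter_filter_le:
  fixes a b :: "'a::linorder"
  assumes "a \<le> b"
  shows "filter (\<lambda>y. b \<le> y) (filter (\<lambda>y. a \<le> y) P) = filter (\<lambda>y. b \<le> y) P"
  using assms by (induction P) auto

lemma split_bl: "split_at_sym m A = butlast (split_at_sym m A) @ [last (split_at_sym m A)]"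
  by simp

lemma kids_snoc_eq: "kids m (A @ [m]) = kids m A @ [Node []]"
proof -
  have "kids m (A @ [m]) = filt (map (val (Suc m)) (split_at_sym m A) @ [Node []])"
    by (simp add: kids_def split_snoc_eq)
  also have "\<dots> = kids m A @ [Node []]" by (simp add: filt_snoc kids_def)
  finally show ?thesis .
qed

lemma kids_snoc_neq:
  assumes "m \<noteq> n"
  shows "kids m (A @ [n]) = filter (\<lambda>y. val (Suc m) (last (split_at_sym m A) @ [n]) \<le> y)
             (filt (map (val (Suc m)) (butlast (split_at_sym m A)))) @ [val (Suc m) (last (split_at_sym m A) @ [n])]"
    and "kids m A = filter (\<lambda>y. val (Suc m) (last (split_at_sym m A)) \<le> y)
             (filt (map (val (Suc m)) (butlast (split_at_sym m A)))) @ [val (Suc m) (last (split_at_sym m A))]"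
proof -
  show "kids m (A @ [n]) = filter (\<lambda>y. val (Suc m) (last (split_at_sym m A) @ [n]) \<le> y)
             (filt (map (val (Suc m)) (butlast (split_at_sym m A)))) @ [val (Suc m) (last (split_at_sym m A) @ [n])]"
    unfolding kids_def split_snoc_neq[OF assms[symmetric]] by (simp add: filt_snoc)
  obtain ys x where yx: "split_at_sym m A = ys @ [x]" using split_ne[of m A] by (metis rev_exhaust)
  show "kids m A = filter (\<lambda>y. val (Suc m) (last (split_at_sym m A)) \<le> y)
             (filt (map (val (Suc m)) (butlast (split_at_sym m A)))) @ [val (Suc m) (last (split_at_sym m A))]"
    unfolding kids_def yx by (simp add: filt_snoc)
qed

lemma inS_snoc: "inS m A \<Longrightarrow> m \<le> n \<Longrightarrow> inS m (A @ [n])"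
  by (auto simp: inS_def)

lemma inS_last: "inS m A \<Longrightarrow> inS (Suc m) (last (split_at_sym m A))"
  by (erule inS_split) (rule last_in_set[OF split_ne])

lemma val_mono_snoc: "inS m A \<Longrightarrow> m \<le> n \<Longrightarrow> val m A \<le> val m (A @ [n])"
proof (induction "n - m" arbitrary: m A)
  case 0
  then have n: "n = m" by simp
  show ?case
  proof (cases "A = []")
    case True then show ?thesis by simp
  next
    case False
    have "val m (A @ [n]) = Node (kids m A @ [Node []])"
      using val_kids[OF inS_snoc[OF 0(2,3)]] n kids_snoc_eq by simp
    moreover have "val m A = Node (kids m A)" by (rule val_kids[OF 0(2) False])
    moreover have "kids m A \<le> kids m A @ [Node []]" by (rule le_append_self)
    ultimately show ?thesis by simp
  qed
next
  case (Suc k)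
  have mn: "m \<noteq> n" "Suc m \<le> n" using Suc.hyps(2) by auto
  show ?case
  proof (cases "A = []")
    case True then show ?thesis by simp
  next
    case False
    let ?x = "last (split_at_sym m A)"
    have "val (Suc m) ?x \<le> val (Suc m) (?x @ [n])"
      using Suc.hyps(1)[of "Suc m" ?x] Suc.hyps(2) inS_last[OF Suc.prems(1)] mn(2) by simp
    then have "kids m A \<le> kids m (A @ [n])"
      unfolding kids_snoc_neq(1)[OF mn(1)] kids_snoc_neq(2)[OF mn(1), of A] by (rule filter_mono_le)
    then show ?thesis
      using val_kids[OF Suc.prems(1) False] val_kids[OF inS_snoc[OF Suc.prems]] by simp
  qed
qed

lemma val_cong_snoc: "inS m A \<Longrightarrow> inS m B \<Longrightarrow> m \<le> n \<Longrightarrow> val m A = val m B \<Longrightarrow>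
   val m (A @ [n]) = val m (B @ [n])"
proof (induction "n - m" arbitrary: m A B)
  case 0
  then have n: "n = m" by simp
  show ?case
  proof (cases "A = []")
    case True
    then have "B = []" using 0 val_ne by force
    then show ?thesis using True by simp
  next
    case False
    then have B: "B \<noteq> []" using 0 val_ne by force
    have "kids m A = kids m B" using 0(5) val_kids[OF 0(2) False] val_kids[OF 0(3) B] by simp
    then show ?thesis
      using val_kids[OF inS_snoc[OF 0(2,4)]] val_kids[OF inS_snoc[OF 0(3,4)]] n kids_snoc_eq by simp
  qed
next
  case (Suc k)
  have mn: "m \<noteq> n" "Suc m \<le> n" using Suc.hyps(2) by auto
  show ?case
  proof (cases "A = []")
    case True
    then have "B = []" using Suc.prems val_ne by force
    then show ?thesis using True by simp
  next
    case False
    then have B: "B \<noteq> []" using Suc.prems val_ne by force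
    have kAB: "kids m A = kids m B"
      using Suc.prems(4) val_kids[OF Suc.prems(1) False] val_kids[OF Suc.prems(2) B] by simp
    let ?f = "val (Suc m)"
    let ?x = "last (split_at_sym m A)" and ?y = "last (split_at_sym m B)"
    let ?P = "filt (map ?f (butlast (split_at_sym m A)))" and ?Q = "filt (map ?f (butlast (split_at_sym m B)))"
    have e: "filter (\<lambda>y. ?f ?x \<le> y) ?P @ [?f ?x] = filter (\<lambda>y. ?f ?y \<le> y) ?Q @ [?f ?y]"
      using kAB unfolding kids_snoc_neq(2)[OF mn(1), of A] kids_snoc_neq(2)[OF mn(1), of B] .
    then have ab: "?f ?x = ?f ?y" and fe: "filter (\<lambda>y. ?f ?x \<le> y) ?P = filter (\<lambda>y. ?f ?y \<le> y) ?Q"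
      by auto
    have bb: "?f (?x @ [n]) = ?f (?y @ [n])"
      using Suc.hyps(1)[of "Suc m" ?x ?y] Suc.hyps(2) inS_last[OF Suc.prems(1)] inS_last[OF Suc.prems(2)] mn(2) ab
      by simp
    have le: "?f ?x \<le> ?f (?x @ [n])" by (rule val_mono_snoc[OF inS_last[OF Suc.prems(1)] mn(2)])
    have "filter (\<lambda>y. ?f (?x @ [n]) \<le> y) ?P = filter (\<lambda>y. ?f (?x @ [n]) \<le> y) (filter (\<lambda>y. ?f ?x \<le> y) ?P)"
      using filter_filter_le[OF le] by simp
    also have "\<dots> = filter (\<lambda>y. ?f (?x @ [n]) \<le> y) (filter (\<lambda>y. ?f ?y \<le> y) ?Q)" using fe by simp
    also have "\<dots> = filter (\<lambda>y. ?f (?x @ [n]) \<le> y) ?Q" using filter_filter_le[of "?f ?y" "?f (?x @ [n])"] le ab by simp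
    finally have "kids m (A @ [n]) = kids m (B @ [n])"
      unfolding kids_snoc_neq(1)[OF mn(1)] bb by simp
    then show ?thesis
      using val_kids[OF inS_snoc[OF Suc.prems(1,3)]] val_kids[OF inS_snoc[OF Suc.prems(2,3)]] by simp
  qed
qed




lemma Min_eq_inS: "n \<in> set L \<Longrightarrow> inS n L \<Longrightarrow> Min (set L) = n"
  by (rule Min_eqI) (auto simp: inS_def)

lemma val_eq_shift:
  assumes "A @ B \<noteq> []" "m \<le> Min (set (A @ B))"
  shows "val m A = val m B \<longleftrightarrow> val (Min (set (A @ B))) A = val (Min (set (A @ B))) B"
proof -
  have s: "set (B @ A) = set (A @ B)" by auto
  have 1: "val m A \<le> val m B \<longleftrightarrow> val (Min (set (A @ B))) A \<le> val (Min (set (A @ B))) B"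
    by (rule val_shift_Min[OF assms])
  have 2: "val m B \<le> val m A \<longleftrightarrow> val (Min (set (A @ B))) B \<le> val (Min (set (A @ B))) A"
    using val_shift_Min[of B A m] assms s by auto
  show ?thesis using 1 2 by (auto intro: antisym)
qed

lemma NF_props:
  assumes "NF A" "A \<noteq> []"
  shows "2 \<le> length (split_at_sym (Min (set A)) A)"
    and "\<forall>i. Suc i < length (split_at_sym (Min (set A)) A) \<longrightarrow>
            (split_at_sym (Min (set A)) A ! Suc i) \<preceq>w (split_at_sym (Min (set A)) A ! i)"
    and "\<forall>X\<in>set (split_at_sym (Min (set A)) A). NF X"
  using assms by (auto elim: NF.cases)

lemma transp_ge: "transp (\<lambda>x y::'a::order. y \<le> x)"
  by (auto simp: transp_def)

lemma NF_kids:
  assumes "NF A" "A \<noteq> []" "n = Min (set A)"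
  shows "kids n A = map (val (Suc n)) (split_at_sym n A)"
proof -
  let ?As = "split_at_sym n A" and ?f = "val (Suc n)"
  have inSA: "inS n A" using assms(3) by (auto simp: inS_def)
  have iS: "inS (Suc n) X" if "X \<in> set ?As" for X by (rule inS_split[OF inSA that])
  have "\<forall>i. Suc i < length (map ?f ?As) \<longrightarrow> map ?f ?As ! Suc i \<le> map ?f ?As ! i"
  proof (intro allI impI)
    fix i assume i: "Suc i < length (map ?f ?As)"
    have "(?As ! Suc i) \<preceq>w (?As ! i)" using NF_props(2)[OF assms(1,2)] i assms(3) by simp
    moreover have "inS (Suc n) (?As ! Suc i)" "inS (Suc n) (?As ! i)" using i by (auto intro!: iS)
    ultimately show "map ?f ?As ! Suc i \<le> map ?f ?As ! i" using word_le_val i by simp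
  qed
  then have "sorted_wrt (\<lambda>x y. y \<le> x) (map ?f ?As)"
    using sorted_wrt_iff_nth_Suc_transp[OF transp_ge] by blast
  then show ?thesis unfolding kids_def by (rule filt_sorted_id)
qed

lemma nf_unique:
  "NF A \<Longrightarrow> NF B \<Longrightarrow> inS m A \<Longrightarrow> inS m B \<Longrightarrow> val m A = val m B \<Longrightarrow> A = B"
proof (induction "length A + length B" arbitrary: A B m rule: less_induct)
  case less
  show ?case
  proof (cases "A = [] \<or> B = []")
    case True
    then show ?thesis using less.prems val_ne by (metis val_Nil)
  next
    case False
    then have ne: "A \<noteq> []" "B \<noteq> []" "A @ B \<noteq> []" by auto
    define n where "n = Min (set (A @ B))"
    have mn: "m \<le> n" unfolding n_def using less.prems(3,4) ne
      by (intro Min.boundedI) (auto simp: inS_def)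
    have eqn: "val n A = val n B" using val_eq_shift[OF ne(3) mn[unfolded n_def]] less.prems(5) n_def by simp
    have inA: "inS n A" and inB: "inS n B" unfolding inS_def n_def using Min_le_app by auto
    have nin: "n \<in> set (A @ B)" unfolding n_def using ne(3) by (intro Min_in) auto
    have kAB: "kids n A = kids n B" using eqn val_kids[OF inA ne(1)] val_kids[OF inB ne(2)] by simp
    have lenk: "n \<in> set X \<Longrightarrow> inS n X \<Longrightarrow> NF X \<Longrightarrow> X \<noteq> [] \<Longrightarrow> 2 \<le> length (kids n X)" for X
      using NF_kids[of X n] NF_props(1)[of X] Min_eq_inS[of n X] by simp
    show ?thesis
    proof (cases "n \<in> set A")
      case True
      note nA = this
      show ?thesis
      proof (cases "n \<in> set B")
        case False
        have "length (kids n B) = 1" using kids_notin[OF False] by simp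
        then show ?thesis using lenk[OF nA inA less.prems(1) ne(1)] kAB by simp
      next
        case True
        note nB = this
        have MA: "Min (set A) = n" by (rule Min_eq_inS[OF nA inA])
        have MB: "Min (set B) = n" by (rule Min_eq_inS[OF nB inB])
        let ?As = "split_at_sym n A" and ?Bs = "split_at_sym n B" and ?f = "val (Suc n)"
        have mAB: "map ?f ?As = map ?f ?Bs"
          using kAB NF_kids[OF less.prems(1) ne(1) MA[symmetric]] NF_kids[OF less.prems(2) ne(2) MB[symmetric]]
          by simp
        then have len: "length ?As = length ?Bs" by (metis length_map)
        have "?As = ?Bs"
        proof (rule nth_equalityI[OF len])
          fix i assume i: "i < length ?As"
          then have iB: "i < length ?Bs" using len by simp
          have X: "?As ! i \<in> set ?As" and Y: "?Bs ! i \<in> set ?Bs" using i iB by auto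
          show "?As ! i = ?Bs ! i"
          proof (rule less.hyps)
            show "length (?As ! i) + length (?Bs ! i) < length A + length B"
              using split_shorter[OF X nA] split_shorter[OF Y nB] by simp
            show "NF (?As ! i)" using NF_props(3)[OF less.prems(1) ne(1)] X MA by simp
            show "NF (?Bs ! i)" using NF_props(3)[OF less.prems(2) ne(2)] Y MB by simp
            show "inS (Suc n) (?As ! i)" by (rule inS_split[OF inA X])
            show "inS (Suc n) (?Bs ! i)" by (rule inS_split[OF inB Y])
            show "?f (?As ! i) = ?f (?Bs ! i)" using mAB i iB by (metis nth_map)
          qed
        qed
        then show ?thesis by (metis join_split)
      qed
    next
      case False
      then have nB: "n \<in> set B" using nin by simp
      have "length (kids n A) = 1" using kids_notin[OF False] by simp
      then show ?thesis using lenk[OF nB inB less.prems(2) ne(2)] kAB by simp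
    qed
  qed
qed




lemma nf_exists: "inS m A \<Longrightarrow> \<exists>N. NF N \<and> inS m N \<and> val m N = val m A"
proof (induction "length A" arbitrary: A m rule: less_induct)
  case less
  show ?case
  proof (cases "A = []")
    case True
    have "NF [] \<and> inS m [] \<and> val m [] = val m A" using True NF_empty by (simp add: inS_def)
    then show ?thesis by blast
  next
    case False
    note Ane = this
    define n where "n = Min (set A)"
    have nA: "n \<in> set A" unfolding n_def using False by (intro Min_in) auto
    have inA: "inS n A" unfolding inS_def n_def by auto
    have mn: "m \<le> n" using less.prems nA by (auto simp: inS_def)
    let ?As = "split_at_sym n A" and ?f = "val (Suc n)"
    have "\<forall>X\<in>set ?As. \<exists>N. NF N \<and> inS (Suc n) N \<and> ?f N = ?f X"
    proof
      fix X assume X: "X \<in> set ?As"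
      show "\<exists>N. NF N \<and> inS (Suc n) N \<and> ?f N = ?f X"
        by (rule less.hyps[OF split_shorter[OF X nA] inS_split[OF inA X]])
    qed
    from bchoice[OF this] obtain g where g: "\<forall>X\<in>set ?As. NF (g X) \<and> inS (Suc n) (g X) \<and> ?f (g X) = ?f X"
      by blast
    define Ns where "Ns = map g ?As"
    define Ks where "Ks = filtby ?f Ns"
    have mNs: "map ?f Ns = map ?f ?As" unfolding Ns_def map_map
    proof (rule map_cong[OF refl])
      fix X assume X: "X \<in> set ?As"
      have "?f (g X) = ?f X" using g X by blast
      then show "(?f \<circ> g) X = ?f X" by simp
    qed
    have mKs: "map ?f Ks = kids n A" unfolding Ks_def kids_def by (simp only: filt_map mNs)
    have Nne: "Ns \<noteq> []" unfolding Ns_def by simp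
    have Kne: "Ks \<noteq> []" unfolding Ks_def using Nne by (rule filtby_ne)
    have Kset: "\<forall>K\<in>set Ks. NF K \<and> inS (Suc n) K"
    proof
      fix K assume "K \<in> set Ks"
      then have "K \<in> set Ns" unfolding Ks_def using filtby_set[of ?f Ns] by blast
      then obtain X where X: "X \<in> set ?As" "K = g X" unfolding Ns_def by (auto simp only: set_map)
      show "NF K \<and> inS (Suc n) K" using g[rule_format, OF X(1)] X(2) by simp
    qed
    have Knot: "n \<notin> set K" if "K \<in> set Ks" for K
    proof
      assume nK: "n \<in> set K"
      have "inS (Suc n) K" using Kset that by blast
      then have "Suc n \<le> n" using nK unfolding inS_def by blast
      then show False by simp
    qed
    have sortK: "sorted_wrt (\<lambda>x y. y \<le> x) (map ?f Ks)"
      using mKs filt_sorted unfolding kids_def by metis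
    have "\<exists>N. NF N \<and> inS n N \<and> val n N = val n A"
    proof (cases "length Ks = 1")
      case True
      then obtain K where K: "Ks = [K]" by (cases Ks) auto
      have KK: "NF K" "inS (Suc n) K" "n \<notin> set K" using Kset Knot K by auto
      have "K \<noteq> []"
      proof
        assume "K = []"
        then have "kids n A = [Node []]" using mKs K by simp
        then show False using kids_not_single[OF inA nA] by simp
      qed
      moreover have iK: "inS n K" using KK(2) by (auto simp: inS_def)
      ultimately have "val n K = Node [?f K]"
        using val_kids[OF iK] kids_notin[OF KK(3)] by simp
      also have "\<dots> = val n A" using val_kids[OF inA Ane] mKs K by simp
      finally show ?thesis using KK(1) iK by blast
    next
      case False
      have "length Ks \<noteq> 0" using Kne by simp
      then have l2: "2 \<le> length Ks" using False by linarith
      define N where "N = join n Ks"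
      have sN: "split_at_sym n N = Ks" unfolding N_def by (rule split_join[OF Kne]) (use Knot in blast)
      have nN: "n \<in> set N" unfolding N_def by (rule in_join[OF l2])
      have iN: "inS n N"
      proof -
        have "set N \<subseteq> insert n (\<Union>X\<in>set Ks. set X)" unfolding N_def by (rule set_join)
        then show ?thesis using Kset by (fastforce simp: inS_def)
      qed
      have MN: "Min (set N) = n" by (rule Min_eq_inS[OF nN iN])
      have Nne: "N \<noteq> []" using nN by auto
      have "NF N"
      proof (rule NF_step[OF Nne MN[symmetric] sN[symmetric]])
        show "2 \<le> length Ks" by (rule l2)
        show "\<forall>X\<in>set Ks. NF X" using Kset by blast
        show "\<forall>i. Suc i < length Ks \<longrightarrow> (Ks ! Suc i) \<preceq>w (Ks ! i)"
        proof (intro allI impI)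
          fix i assume i: "Suc i < length Ks"
          have "map ?f Ks ! Suc i \<le> map ?f Ks ! i"
            using sorted_wrt_nth_less[OF sortK, of i "Suc i"] i by simp
          moreover have "inS (Suc n) (Ks ! Suc i)" "inS (Suc n) (Ks ! i)"
          proof -
            have "Ks ! Suc i \<in> set Ks" "Ks ! i \<in> set Ks" using i by simp_all
            then show "inS (Suc n) (Ks ! Suc i)" "inS (Suc n) (Ks ! i)" using Kset by blast+
          qed
          ultimately show "(Ks ! Suc i) \<preceq>w (Ks ! i)" using word_le_val i by simp
        qed
      qed
      moreover have "val n N = val n A"
      proof -
        have "kids n N = filt (map ?f Ks)" unfolding kids_def sN ..
        also have "\<dots> = map ?f Ks" by (rule filt_sorted_id[OF sortK])
        finally show ?thesis using val_kids[OF iN Nne] val_kids[OF inA Ane] mKs by simp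
      qed
      ultimately show ?thesis using iN by blast
    qed
    then obtain N where N: "NF N" "inS n N" "val n N = val n A" by blast
    have iNm: "inS m N" using N(2) mn by (auto simp: inS_def)
    have NA: "N @ A \<noteq> []" using Ane by simp
    have iNA: "inS n (N @ A)" using N(2) inA unfolding inS_def by auto
    have nNA: "n \<in> set (N @ A)" using nA by simp
    have MNA: "Min (set (N @ A)) = n" by (rule Min_eq_inS[OF nNA iNA])
    have mle: "m \<le> Min (set (N @ A))" using MNA mn by simp
    have e: "val m N = val m A \<longleftrightarrow> val (Min (set (N @ A))) N = val (Min (set (N @ A))) A"
      by (rule val_eq_shift[OF NA mle])
    have "val m N = val m A" using e N(3) unfolding MNA by blast
    then show ?thesis using N(1) iNm by blast
  qed
qed

theorem proposition1:
  shows "(\<forall>(n::nat) (A1::word) (A2::word). A1 \<sim>w A2 \<longrightarrow> a_op n A1 \<sim>w a_op n A2)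
       \<and> (\<forall>(n::nat) (A1::word) (A2::word). NF A1 \<longrightarrow> A1 \<sim>w A2 \<longrightarrow> diamond n A1 \<sim>w a_op n A2)"
proof -
  have P1: "a_op n A1 \<sim>w a_op n A2" if "A1 \<sim>w A2" for n A1 A2
    using that val_cong_snoc[OF inS0 inS0, of n A1 A2]
    by (simp add: word_equiv_val a_op_def)
  have P2: "diamond n A1 \<sim>w a_op n A2" if "A1 \<sim>w A2" for n A1 A2
  proof -
    obtain N where N: "NF N" "val 0 N = val 0 (A1 @ [n])" using nf_exists[OF inS0] by blast
    have ex1: "\<exists>!B. NF B \<and> B \<sim>w (A1 @ [n])"
    proof (rule ex1I[of _ N])
      show "NF N \<and> N \<sim>w (A1 @ [n])" using N by (simp add: word_equiv_val)
      fix B assume "NF B \<and> B \<sim>w (A1 @ [n])"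
      then show "B = N" using N by (intro nf_unique[OF _ _ inS0 inS0]) (auto simp: word_equiv_val)
    qed
    have "NF (diamond n A1) \<and> diamond n A1 \<sim>w (A1 @ [n])"
      unfolding diamond_def by (rule theI'[OF ex1])
    then have "val 0 (diamond n A1) = val 0 (A1 @ [n])" by (simp add: word_equiv_val)
    also have "\<dots> = val 0 (A2 @ [n])"
      using P1[OF that] by (simp add: word_equiv_val a_op_def)
    finally show ?thesis by (simp add: word_equiv_val a_op_def)
  qed
  show ?thesis using P1 P2 by blast
qed


end
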